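(* Let $C>0$, $C'>0$ and $n\geq\mathrm{e}^{C/8}M\log M$, and draw the entries of an $M\times n$ matrix $\Phi=\{\varphi_i\}_{i=1}^n$ independently from $\mathbb{C}\mathcal{N}(0,\frac1M)$. Given $x\in\mathbb{C}^M\setminus\{0\}$, consider $z_i:=|\langle x,\varphi_i\rangle|^2+\nu_i$, $i=1,\dots,n$, where the real noise vector $\nu=\{\nu_i\}_{i=1}^n$ satisfies $\frac{\|\nu\|}{\|x\|^2}\leq\frac{C'}{\sqrt{M}}$. Let $\beta:=3\mathrm{e}^{-C/8}$. Then with overwhelming probability, \[ \#\Big\{i:\ z_i>\frac{2C}{M}\|x\|^2\Big\}<2\beta n . \]
   Context: $\mathbb{C}\mathcal{N}(0,\sigma^2)$ is the complex Gaussian with independent $\mathcal{N}(0,\sigma^2/2)$ real and imaginary parts. "With overwhelming probability" means with probability tending to $1$ exponentially fast as $M\to\infty$ (probability at least $1-c_0\mathrm{e}^{-c_1M}$ for constants $c_0,c_1>0$), for $M$ sufficiently large. *)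

theory Defs
  imports "HOL-Probability.Probability"
begin

text \<open>Complex Gaussian CN(0, s2): independent real and imaginary parts, each N(0, s2/2).
  normal_density mu sigma uses sigma as standard deviation.\<close>
definition cgauss :: "real \<Rightarrow> complex measure" where
  "cgauss s2 = distr
     (density lborel (normal_density 0 (sqrt (s2 / 2))) \<Otimes>\<^sub>M
      density lborel (normal_density 0 (sqrt (s2 / 2))))
     borel (\<lambda>(a, b). Complex a b)"

text \<open>Random M x n matrix with i.i.d. CN(0,1/M) entries; entry (j,i) is row j, column i.\<close>
definition gauss_matrix :: "nat \<Rightarrow> nat \<Rightarrow> (nat \<times> nat \<Rightarrow> complex) measure" where
  "gauss_matrix M n = PiM ({..<M} \<times> {..<n}) (\<lambda>_. cgauss (1 / real M))"

definition cinner :: "nat \<Rightarrow> (nat \<Rightarrow> complex) \<Rightarrow> (nat \<Rightarrow> complex) \<Rightarrow> complex" where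
  "cinner M x y = (\<Sum>j<M. x j * cnj (y j))"

definition cvnorm :: "nat \<Rightarrow> (nat \<Rightarrow> complex) \<Rightarrow> real" where
  "cvnorm M x = sqrt (\<Sum>j<M. (cmod (x j))\<^sup>2)"

definition rvnorm :: "nat \<Rightarrow> (nat \<Rightarrow> real) \<Rightarrow> real" where
  "rvnorm n v = sqrt (\<Sum>i<n. (v i)\<^sup>2)"

end

theory Submission
  imports Defs
begin


lemma mgf_normal:
  fixes \<sigma> t :: real assumes s: "\<sigma> > 0"
  shows "(\<integral>\<^sup>+u. ennreal (exp (t*u)) \<partial>density lborel (normal_density 0 \<sigma>)) = ennreal (exp (t^2*\<sigma>^2/2))"
proof -
  have pt: "normal_density 0 \<sigma> u * exp (t*u) = exp (t^2*\<sigma>^2/2) * normal_density (t*\<sigma>^2) \<sigma> u" for u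
  proof -
    have "-(u - 0)\<^sup>2/ (2 * \<sigma>\<^sup>2) + t*u = t^2*\<sigma>^2/2 + (-(u - t*\<sigma>^2)\<^sup>2/ (2 * \<sigma>\<^sup>2))"
      using s by (simp add: field_simps power2_eq_square)
    then show ?thesis unfolding normal_density_def
      by (simp add: exp_add[symmetric] mult_ac)
  qed
  have "(\<integral>\<^sup>+u. ennreal (exp (t*u)) \<partial>density lborel (normal_density 0 \<sigma>))
      = (\<integral>\<^sup>+u. ennreal (normal_density 0 \<sigma> u) * ennreal (exp (t*u)) \<partial>lborel)"
    by (subst nn_integral_density) auto
  also have "\<dots> = (\<integral>\<^sup>+u. ennreal (exp (t^2*\<sigma>^2/2)) * ennreal (normal_density (t*\<sigma>^2) \<sigma> u) \<partial>lborel)"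
    by (intro nn_integral_cong) (simp add: pt ennreal_mult[symmetric])
  also have "\<dots> = ennreal (exp (t^2*\<sigma>^2/2)) * (\<integral>\<^sup>+u. ennreal (normal_density (t*\<sigma>^2) \<sigma> u) \<partial>lborel)"
    by (subst nn_integral_cmult) auto
  also have "(\<integral>\<^sup>+u. ennreal (normal_density (t*\<sigma>^2) \<sigma> u) \<partial>lborel) = 1"
    using integrable_normal_density[OF s] integral_normal_density[OF s]
    by (subst nn_integral_eq_integral) auto
  finally show ?thesis by simp
qed



lemma meas_Complex[measurable]: "(\<lambda>(a, b). Complex a b) \<in> borel_measurable (borel \<Otimes>\<^sub>M borel)"
proof -
  have "(\<lambda>(a, b). Complex a b) = (\<lambda>p. complex_of_real (fst p) + \<i> * complex_of_real (snd p))"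
    by (auto simp: fun_eq_iff complex_eq_iff)
  then show ?thesis by simp
qed

lemma prob_space_cgauss: assumes "s > 0" shows "prob_space (cgauss s)"
proof -
  let ?N = "density lborel (normal_density 0 (sqrt (s / 2)))"
  interpret N: prob_space ?N by (rule prob_space_normal_density) (simp add: assms)
  interpret P: pair_prob_space ?N ?N ..
  show ?thesis unfolding cgauss_def
    by (rule P.prob_space_distr) (simp add: measurable_split_conv meas_Complex[unfolded case_prod_beta])
qed

lemma mgf_cgauss:
  fixes s \<alpha> \<beta> :: real assumes s: "s > 0"
  shows "(\<integral>\<^sup>+z. ennreal (exp (\<alpha> * Re z + \<beta> * Im z)) \<partial>cgauss s) = ennreal (exp ((\<alpha>^2 + \<beta>^2) * s / 4))"
proof -
  define \<sigma> where "\<sigma> = sqrt (s/2)"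
  have \<sigma>: "\<sigma> > 0" using s by (simp add: \<sigma>_def)
  have \<sigma>2: "\<sigma>^2 = s/2" using s by (simp add: \<sigma>_def)
  let ?N = "density lborel (normal_density 0 \<sigma>)"
  interpret N: prob_space ?N by (rule prob_space_normal_density) (simp add: \<sigma>)
  have "(\<integral>\<^sup>+z. ennreal (exp (\<alpha> * Re z + \<beta> * Im z)) \<partial>cgauss s)
     = (\<integral>\<^sup>+p. ennreal (exp (\<alpha> * Re ((\<lambda>(a, b). Complex a b) p) + \<beta> * Im ((\<lambda>(a, b). Complex a b) p))) \<partial>(?N \<Otimes>\<^sub>M ?N))"
    unfolding cgauss_def \<sigma>_def
    by (subst nn_integral_distr) (auto simp: measurable_split_conv meas_Complex[unfolded case_prod_beta])
  also have "\<dots> = (\<integral>\<^sup>+p. ennreal (exp (\<alpha> * fst p)) * ennreal (exp (\<beta> * snd p)) \<partial>(?N \<Otimes>\<^sub>M ?N))"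
    by (intro nn_integral_cong) (auto simp: exp_add ennreal_mult)
  also have "\<dots> = (\<integral>\<^sup>+a. \<integral>\<^sup>+b. ennreal (exp (\<alpha> * fst (a,b))) * ennreal (exp (\<beta> * snd (a,b))) \<partial>?N \<partial>?N)"
    by (rule N.nn_integral_fst[symmetric]) simp
  also have "\<dots> = (\<integral>\<^sup>+a. ennreal (exp (\<alpha> * a)) * ennreal (exp (\<beta>^2*\<sigma>^2/2)) \<partial>?N)"
    by (intro nn_integral_cong) (simp add: nn_integral_cmult mgf_normal[OF \<sigma>])
  also have "\<dots> = ennreal (exp (\<alpha>^2*\<sigma>^2/2)) * ennreal (exp (\<beta>^2*\<sigma>^2/2))"
    by (simp add: nn_integral_multc mgf_normal[OF \<sigma>])
  also have "\<dots> = ennreal (exp ((\<alpha>^2 + \<beta>^2) * s / 4))"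
    by (simp add: \<sigma>2 ennreal_mult[symmetric] exp_add[symmetric] field_simps)
  finally show ?thesis .
qed



lemma col_mgf:
  fixes s :: real and \<alpha> \<beta> :: "nat \<Rightarrow> real" and i n M :: nat
  assumes s: "s > 0" and i: "i < n"
  shows "(\<integral>\<^sup>+\<Phi>. ennreal (exp (\<Sum>j<M. \<alpha> j * Re (\<Phi> (j,i)) + \<beta> j * Im (\<Phi> (j,i))))
            \<partial>PiM ({..<M} \<times> {..<n}) (\<lambda>_. cgauss s))
         = ennreal (exp ((\<Sum>j<M. \<alpha> j ^ 2 + \<beta> j ^ 2) * s / 4))"
proof -
  let ?K = "{..<M} \<times> {..<n}"
  interpret C: prob_space "cgauss s" by (rule prob_space_cgauss[OF s])
  interpret PS: product_prob_space "\<lambda>_::nat\<times>nat. cgauss s" by unfold_locales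
  define f where "f = (\<lambda>(k::nat\<times>nat) z. if snd k = i then ennreal (exp (\<alpha> (fst k) * Re z + \<beta> (fst k) * Im z)) else 1)"
  have fm: "f k \<in> borel_measurable (cgauss s)" for k
  proof -
    have "sets (cgauss s) = sets borel" by (simp add: cgauss_def)
    moreover have "f k \<in> borel_measurable borel" unfolding f_def by (cases k) simp
    ultimately show ?thesis using measurable_cong_sets[of "cgauss s" borel borel borel] by simp
  qed
  have sub: "{..<M} \<times> {i} \<subseteq> ?K" using i by auto
  have eq1: "(\<Prod>k\<in>?K. f k (\<Phi> k)) = ennreal (exp (\<Sum>j<M. \<alpha> j * Re (\<Phi> (j,i)) + \<beta> j * Im (\<Phi> (j,i))))" for \<Phi> :: "nat\<times>nat \<Rightarrow> complex"
  proof -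
    have "(\<Prod>k\<in>?K. f k (\<Phi> k)) = (\<Prod>k\<in>{..<M} \<times> {i}. f k (\<Phi> k))"
      by (rule prod.mono_neutral_right; (simp add: sub)?) (auto simp: f_def)
    also have "\<dots> = (\<Prod>j<M. f (j,i) (\<Phi> (j,i)))"
    proof -
      have "{..<M} \<times> {i} = (\<lambda>j. (j,i)) ` {..<M}" by auto
      then show ?thesis by (simp add: prod.reindex inj_on_def)
    qed
    also have "\<dots> = (\<Prod>j<M. ennreal (exp (\<alpha> j * Re (\<Phi> (j,i)) + \<beta> j * Im (\<Phi> (j,i)))))"
      by (simp add: f_def)
    also have "\<dots> = ennreal (\<Prod>j<M. exp (\<alpha> j * Re (\<Phi> (j,i)) + \<beta> j * Im (\<Phi> (j,i))))"
      by (simp add: prod_ennreal)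
    also have "\<dots> = ennreal (exp (\<Sum>j<M. \<alpha> j * Re (\<Phi> (j,i)) + \<beta> j * Im (\<Phi> (j,i))))"
      by (simp add: exp_sum)
    finally show ?thesis .
  qed
  have int1: "integral\<^sup>N (cgauss s) (f k) = (if snd k = i then ennreal (exp ((\<alpha> (fst k) ^ 2 + \<beta> (fst k) ^ 2) * s / 4)) else 1)" for k
    by (simp add: f_def mgf_cgauss[OF s] C.emeasure_space_1)
  have "(\<integral>\<^sup>+\<Phi>. ennreal (exp (\<Sum>j<M. \<alpha> j * Re (\<Phi> (j,i)) + \<beta> j * Im (\<Phi> (j,i))))
            \<partial>PiM ?K (\<lambda>_. cgauss s)) = (\<integral>\<^sup>+\<Phi>. (\<Prod>k\<in>?K. f k (\<Phi> k)) \<partial>PiM ?K (\<lambda>_. cgauss s))"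
    by (simp add: eq1)
  also have "\<dots> = (\<Prod>k\<in>?K. integral\<^sup>N (cgauss s) (f k))"
    by (rule PS.product_nn_integral_prod) (auto simp: fm)
  also have "\<dots> = (\<Prod>k\<in>{..<M} \<times> {i}. integral\<^sup>N (cgauss s) (f k))"
    by (rule prod.mono_neutral_right; (simp add: sub)?) (auto simp: int1)
  also have "\<dots> = (\<Prod>j<M. integral\<^sup>N (cgauss s) (f (j,i)))"
  proof -
    have "{..<M} \<times> {i} = (\<lambda>j. (j,i)) ` {..<M}" by auto
    then show ?thesis by (simp add: prod.reindex inj_on_def)
  qed
  also have "\<dots> = (\<Prod>j<M. ennreal (exp ((\<alpha> j ^ 2 + \<beta> j ^ 2) * s / 4)))"
    by (simp add: int1)
  also have "\<dots> = ennreal (exp ((\<Sum>j<M. \<alpha> j ^ 2 + \<beta> j ^ 2) * s / 4))"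
    by (simp add: prod_ennreal exp_sum[symmetric] sum_distrib_right sum_divide_distrib)
  finally show ?thesis .
qed



lemma meas_lin:
  fixes \<alpha> \<beta> :: "nat \<Rightarrow> real" and i n M :: nat
  assumes i: "i < n"
  shows "(\<lambda>\<Phi>. \<Sum>j<M. \<alpha> j * Re (\<Phi> (j,i)) + \<beta> j * Im (\<Phi> (j,i))) \<in> borel_measurable (PiM ({..<M} \<times> {..<n}) (\<lambda>_. cgauss s))"
proof -
  have [measurable]: "(\<lambda>\<Phi>. \<Phi> (j,i)) \<in> measurable (PiM ({..<M} \<times> {..<n}) (\<lambda>_. cgauss s)) borel" if "j < M" for j
  proof -
    have "(\<lambda>\<Phi>. \<Phi> (j,i)) \<in> measurable (PiM ({..<M} \<times> {..<n}) (\<lambda>_. cgauss s)) (cgauss s)"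
      using that i by (intro measurable_component_singleton) auto
    moreover have "sets (cgauss s) = sets borel" by (simp add: cgauss_def)
    ultimately show ?thesis using measurable_cong_sets by blast
  qed
  show ?thesis by (intro borel_measurable_sum) measurable
qed

lemma col_tail:
  fixes s r :: real and \<alpha> \<beta> :: "nat \<Rightarrow> real" and i n M :: nat
  assumes s: "s > 0" and i: "i < n" and r: "r > 0" and Q: "(\<Sum>j<M. \<alpha> j ^ 2 + \<beta> j ^ 2) > 0"
  shows "measure (PiM ({..<M} \<times> {..<n}) (\<lambda>_. cgauss s))
     {\<Phi> \<in> space (PiM ({..<M} \<times> {..<n}) (\<lambda>_. cgauss s)). r \<le> (\<Sum>j<M. \<alpha> j * Re (\<Phi> (j,i)) + \<beta> j * Im (\<Phi> (j,i)))}
      \<le> exp (- (r^2) / ((\<Sum>j<M. \<alpha> j ^ 2 + \<beta> j ^ 2) * s))"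
proof -
  let ?P = "PiM ({..<M} \<times> {..<n}) (\<lambda>_. cgauss s)"
  let ?L = "\<lambda>\<Phi>. \<Sum>j<M. \<alpha> j * Re (\<Phi> (j,i)) + \<beta> j * Im (\<Phi> (j,i))"
  define Q where "Q = (\<Sum>j<M. \<alpha> j ^ 2 + \<beta> j ^ 2)"
  have Q0: "Q > 0" using Q by (simp add: Q_def)
  interpret C: prob_space "cgauss s" by (rule prob_space_cgauss[OF s])
  interpret PS: product_prob_space "\<lambda>_::nat\<times>nat. cgauss s" by unfold_locales
  interpret P: prob_space ?P by (rule prob_space_PiM) (rule C.prob_space_axioms)
  define l where "l = 2 * r / (Q * s)"
  have l: "l > 0" using r Q0 s by (simp add: l_def)
  have [measurable]: "?L \<in> borel_measurable ?P" by (rule meas_lin[OF i])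
  have "emeasure ?P {\<Phi> \<in> space ?P. r \<le> ?L \<Phi>} \<le>
        ennreal (exp (-l * r)) * nn_integral ?P (\<lambda>x. ennreal (exp (l * ?L x)) * indicator (space ?P) x)"
    by (rule Chernoff_ineq_nn_integral_ge[OF l]) auto
  also have "nn_integral ?P (\<lambda>x. ennreal (exp (l * ?L x)) * indicator (space ?P) x)
      = (\<integral>\<^sup>+\<Phi>. ennreal (exp (\<Sum>j<M. (l * \<alpha> j) * Re (\<Phi> (j,i)) + (l * \<beta> j) * Im (\<Phi> (j,i)))) \<partial>?P)"
    by (intro nn_integral_cong) (simp add: sum_distrib_left algebra_simps)
  also have "\<dots> = ennreal (exp ((\<Sum>j<M. (l * \<alpha> j) ^ 2 + (l * \<beta> j) ^ 2) * s / 4))"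
    by (rule col_mgf[OF s i])
  also have "(\<Sum>j<M. (l * \<alpha> j) ^ 2 + (l * \<beta> j) ^ 2) = l^2 * Q"
    by (simp add: Q_def sum_distrib_left power_mult_distrib algebra_simps)
  also have "ennreal (exp (-l * r)) * ennreal (exp (l^2 * Q * s / 4)) = ennreal (exp (- (r^2) / (Q * s)))"
  proof -
    have "-l * r + l^2 * Q * s / 4 = - (r^2) / (Q * s)"
      using Q0 s by (simp add: l_def field_simps power2_eq_square)
    then show ?thesis by (simp add: ennreal_mult[symmetric] exp_add[symmetric])
  qed
  finally have "emeasure ?P {\<Phi> \<in> space ?P. r \<le> ?L \<Phi>} \<le> ennreal (exp (- (r^2) / (Q * s)))" .
  then show ?thesis unfolding Q_def[symmetric]
    by (simp add: P.emeasure_eq_measure)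
qed



lemma Re_cinner: "Re (cinner M x y) = (\<Sum>j<M. Re (x j) * Re (y j) + Im (x j) * Im (y j))"
  by (simp add: cinner_def Re_sum)
lemma Im_cinner: "Im (cinner M x y) = (\<Sum>j<M. Im (x j) * Re (y j) + (- Re (x j)) * Im (y j))"
  by (simp add: cinner_def Im_sum)

lemma col_event:
  fixes s T :: real and x :: "nat \<Rightarrow> complex" and i n M :: nat
  assumes s: "s > 0" and i: "i < n" and T: "T > 0" and X: "(\<Sum>j<M. (cmod (x j))^2) > 0"
  shows "measure (PiM ({..<M} \<times> {..<n}) (\<lambda>_. cgauss s))
     {\<Phi> \<in> space (PiM ({..<M} \<times> {..<n}) (\<lambda>_. cgauss s)). T < (cmod (cinner M x (\<lambda>j. \<Phi> (j,i))))^2}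
      \<le> 4 * exp (- ((T/2) / ((\<Sum>j<M. (cmod (x j))^2) * s)))"
proof -
  let ?P = "PiM ({..<M} \<times> {..<n}) (\<lambda>_. cgauss s)"
  define a where "a = (\<lambda>j. Re (x j))"
  define b where "b = (\<lambda>j. Im (x j))"
  define X2 where "X2 = (\<Sum>j<M. (cmod (x j))^2)"
  define r where "r = sqrt (T/2)"
  have r: "r > 0" and r2: "r^2 = T/2" using T by (auto simp: r_def)
  interpret C: prob_space "cgauss s" by (rule prob_space_cgauss[OF s])
  interpret P: prob_space ?P by (rule prob_space_PiM) (rule C.prob_space_axioms)
  have Q1: "(\<Sum>j<M. (f j)^2 + (g j)^2) = X2" if "\<And>j. (f j)^2 + (g j)^2 = (a j)^2 + (b j)^2" for f g :: "nat \<Rightarrow> real"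
    unfolding X2_def using that by (simp add: a_def b_def cmod_power2)
  define E where "E = (\<lambda>f g :: nat \<Rightarrow> real. {\<Phi> \<in> space ?P. r \<le> (\<Sum>j<M. f j * Re (\<Phi> (j,i)) + g j * Im (\<Phi> (j,i)))})"
  have Em: "E f g \<in> sets ?P" for f g
    unfolding E_def using meas_lin[OF i, of f g M s] by measurable
  have Eb: "measure ?P (E f g) \<le> exp (- ((T/2) / (X2 * s)))" if "\<And>j. (f j)^2 + (g j)^2 = (a j)^2 + (b j)^2" for f g
    using col_tail[OF s i r, of f g M] Q1[OF that] X r2 unfolding E_def X2_def by simp
  let ?A = "E a b" and ?B = "E (\<lambda>j. - a j) (\<lambda>j. - b j)" and ?C = "E b (\<lambda>j. - a j)" and ?D = "E (\<lambda>j. - b j) a"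
  have sub: "{\<Phi> \<in> space ?P. T < (cmod (cinner M x (\<lambda>j. \<Phi> (j,i))))^2} \<subseteq> ?A \<union> ?B \<union> ?C \<union> ?D"
  proof
    fix \<Phi> assume "\<Phi> \<in> {\<Phi> \<in> space ?P. T < (cmod (cinner M x (\<lambda>j. \<Phi> (j,i))))^2}"
    then have sp: "\<Phi> \<in> space ?P" and lt: "T < (cmod (cinner M x (\<lambda>j. \<Phi> (j,i))))^2" by auto
    define w where "w = cinner M x (\<lambda>j. \<Phi> (j,i))"
    have "T < (Re w)^2 + (Im w)^2" using lt by (simp add: w_def cmod_power2)
    then have "r^2 < (Re w)^2 \<or> r^2 < (Im w)^2" using r2 by linarith
    then have "r \<le> Re w \<or> r \<le> - Re w \<or> r \<le> Im w \<or> r \<le> - Im w"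
      using r by (metis abs_le_square_iff abs_real_def linorder_not_le nle_le order_less_imp_le)
    moreover have "Re w = (\<Sum>j<M. a j * Re (\<Phi> (j,i)) + b j * Im (\<Phi> (j,i)))"
      by (simp add: w_def Re_cinner a_def b_def)
    moreover have "- Re w = (\<Sum>j<M. (- a j) * Re (\<Phi> (j,i)) + (- b j) * Im (\<Phi> (j,i)))"
      by (simp add: w_def Re_cinner a_def b_def sum_negf[symmetric])
    moreover have "Im w = (\<Sum>j<M. b j * Re (\<Phi> (j,i)) + (- a j) * Im (\<Phi> (j,i)))"
      by (simp add: w_def Im_cinner a_def b_def)
    moreover have "- Im w = (\<Sum>j<M. (- b j) * Re (\<Phi> (j,i)) + a j * Im (\<Phi> (j,i)))"
      by (simp add: w_def Im_cinner a_def b_def sum_negf[symmetric])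
    ultimately show "\<Phi> \<in> ?A \<union> ?B \<union> ?C \<union> ?D" using sp unfolding E_def by auto
  qed
  have "measure ?P {\<Phi> \<in> space ?P. T < (cmod (cinner M x (\<lambda>j. \<Phi> (j,i))))^2} \<le> measure ?P (?A \<union> ?B \<union> ?C \<union> ?D)"
    by (rule P.finite_measure_mono[OF sub]) (intro sets.Un Em)
  also have "\<dots> \<le> measure ?P ?A + measure ?P ?B + measure ?P ?C + measure ?P ?D"
  proof -
    have "measure ?P (?A \<union> ?B \<union> ?C \<union> ?D) \<le> measure ?P (?A \<union> ?B \<union> ?C) + measure ?P ?D"
      by (intro measure_subadditive sets.Un Em) (simp_all add: P.emeasure_eq_measure)
    moreover have "measure ?P (?A \<union> ?B \<union> ?C) \<le> measure ?P (?A \<union> ?B) + measure ?P ?C"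
      by (intro measure_subadditive sets.Un Em) (simp_all add: P.emeasure_eq_measure)
    moreover have "measure ?P (?A \<union> ?B) \<le> measure ?P ?A + measure ?P ?B"
      by (intro measure_subadditive sets.Un Em) (simp_all add: P.emeasure_eq_measure)
    ultimately show ?thesis by linarith
  qed
  also have "\<dots> \<le> 4 * exp (- ((T/2) / (X2 * s)))"
    using Eb[of a b] Eb[of "\<lambda>j. - a j" "\<lambda>j. - b j"] Eb[of b "\<lambda>j. - a j"] Eb[of "\<lambda>j. - b j" a]
    by (simp add: add_ac)
  finally show ?thesis unfolding X2_def .
qed



lemma coord_indep:
  assumes N: "\<And>i. i \<in> I \<Longrightarrow> prob_space (N i)" and I: "I \<noteq> {}"
  shows "prob_space.indep_vars (PiM I N) N (\<lambda>i x. x i) I"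
proof -
  interpret P: prob_space "PiM I N" by (rule prob_space_PiM) (rule N)
  have rv: "\<And>i. i \<in> I \<Longrightarrow> P.random_variable (N i) (\<lambda>x. x i)"
    by (rule measurable_component_singleton)
  have "distr (PiM I N) (PiM I N) (\<lambda>x. \<lambda>i\<in>I. x i) = distr (PiM I N) (PiM I N) (\<lambda>x. x)"
    by (rule distr_cong) (auto simp: space_PiM)
  also have "\<dots> = PiM I N" by (rule distr_id)
  also have "\<dots> = (\<Pi>\<^sub>M i\<in>I. distr (PiM I N) (N i) (\<lambda>x. x i))"
    by (rule PiM_cong) (auto simp: distr_PiM_component N)
  finally show ?thesis
    by (subst P.indep_vars_iff_distr_eq_PiM'[OF I rv]) auto
qed



lemma meas_cinner_col:
  fixes x :: "nat \<Rightarrow> complex" and i M :: nat and K' :: "(nat \<times> nat) set"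
  assumes K': "\<And>j. j < M \<Longrightarrow> (j,i) \<in> K'"
  shows "(\<lambda>\<psi>. cinner M x (\<lambda>j. \<psi> (j,i))) \<in> borel_measurable (PiM K' (\<lambda>_. cgauss s))"
proof -
  have [measurable]: "(\<lambda>\<psi>. \<psi> (j,i)) \<in> measurable (PiM K' (\<lambda>_. cgauss s)) borel" if "j < M" for j
  proof -
    have "(\<lambda>\<psi>. \<psi> (j,i)) \<in> measurable (PiM K' (\<lambda>_. cgauss s)) (cgauss s)"
      using that K' by (intro measurable_component_singleton) auto
    moreover have "sets (cgauss s) = sets borel" by (simp add: cgauss_def)
    ultimately show ?thesis using measurable_cong_sets by blast
  qed
  have cm: "cnj \<in> borel_measurable borel"
    by (intro borel_measurable_continuous_onI linear_continuous_on bounded_linear_cnj)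
  have [measurable]: "(\<lambda>\<psi>. cnj (\<psi> (j,i))) \<in> measurable (PiM K' (\<lambda>_. cgauss s)) borel" if "j < M" for j
    using measurable_compose[OF _ cm, of "\<lambda>\<psi>. \<psi> (j,i)"] that by simp
  show ?thesis unfolding cinner_def by (intro borel_measurable_sum) measurable
qed

lemma count_bound:
  fixes s T \<epsilon> :: real and x :: "nat \<Rightarrow> complex" and n M :: nat
  assumes s: "s > 0" and n: "n > 0" and M: "M > 0" and T: "T > 0"
    and X: "(\<Sum>j<M. (cmod (x j))^2) > 0" and \<epsilon>: "\<epsilon> \<ge> 0"
  shows "measure (PiM ({..<M} \<times> {..<n}) (\<lambda>_. cgauss s))
     {\<Phi> \<in> space (PiM ({..<M} \<times> {..<n}) (\<lambda>_. cgauss s)).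
        real n * (4 * exp (- ((T/2) / ((\<Sum>j<M. (cmod (x j))^2) * s)))) + \<epsilon>
          \<le> real (card {i. i < n \<and> T < (cmod (cinner M x (\<lambda>j. \<Phi> (j,i))))^2})}
      \<le> exp (- 2 * \<epsilon>^2 / real n)"
proof -
  let ?K = "{..<M} \<times> {..<n}"
  let ?P = "PiM ?K (\<lambda>_. cgauss s)"
  define p where "p = 4 * exp (- ((T/2) / ((\<Sum>j<M. (cmod (x j))^2) * s)))"
  define Kc where "Kc = (\<lambda>i::nat. {..<M} \<times> {i})"
  define G where "G = (\<lambda>i (\<psi>::nat\<times>nat \<Rightarrow> complex). T < (cmod (cinner M x (\<lambda>j. \<psi> (j,i))))^2)"
  define Y where "Y = (\<lambda>i \<psi>. if G i \<psi> then 1 else (0::real))"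
  define XX where "XX = (\<lambda>i \<Phi>. Y i (restrict \<Phi> (Kc i)))"
  interpret C: prob_space "cgauss s" by (rule prob_space_cgauss[OF s])
  interpret P: prob_space ?P by (rule prob_space_PiM) (rule C.prob_space_axioms)
  have ind0: "P.indep_vars (\<lambda>_. cgauss s) (\<lambda>k \<Phi>. \<Phi> k) ?K"
    by (rule coord_indep) (use n M in \<open>auto intro: C.prob_space_axioms\<close>)
  have ind1: "P.indep_vars (\<lambda>i. PiM (Kc i) (\<lambda>_. cgauss s)) (\<lambda>i \<Phi>. restrict (\<lambda>k. \<Phi> k) (Kc i)) {..<n}"
    by (rule P.indep_vars_restrict[OF ind0]) (auto simp: Kc_def disjoint_family_on_def)
  have Ym: "Y i \<in> borel_measurable (PiM (Kc i) (\<lambda>_. cgauss s))" for i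
  proof -
    have [measurable]: "(\<lambda>\<psi>. cinner M x (\<lambda>j. \<psi> (j,i))) \<in> borel_measurable (PiM (Kc i) (\<lambda>_. cgauss s))"
      by (rule meas_cinner_col) (auto simp: Kc_def)
    show ?thesis unfolding Y_def G_def by measurable
  qed
  have ind: "P.indep_vars (\<lambda>_. borel) XX {..<n}"
    unfolding XX_def using P.indep_vars_compose2[OF ind1, of Y "\<lambda>_. borel"] Ym by simp
  have Gr: "G i (restrict \<Phi> (Kc i)) = G i \<Phi>" for i \<Phi>
  proof -
    have "cinner M x (\<lambda>j. restrict \<Phi> (Kc i) (j,i)) = cinner M x (\<lambda>j. \<Phi> (j,i))"
      unfolding cinner_def by (intro sum.cong) (auto simp: Kc_def)
    then show ?thesis by (simp add: G_def)
  qed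
  have sumX: "(\<Sum>i<n. XX i \<Phi>) = real (card {i. i < n \<and> G i \<Phi>})" for \<Phi>
  proof -
    have "(\<Sum>i<n. XX i \<Phi>) = (\<Sum>i<n. if G i \<Phi> then 1 else 0)"
      by (simp add: XX_def Y_def Gr)
    also have "\<dots> = real (card ({..<n} \<inter> {i. G i \<Phi>}))"
      by (simp add: sum.If_cases)
    also have "{..<n} \<inter> {i. G i \<Phi>} = {i. i < n \<and> G i \<Phi>}" by auto
    finally show ?thesis .
  qed
  have Am: "{\<Phi> \<in> space ?P. G i \<Phi>} \<in> sets ?P" if "i < n" for i
  proof -
    have [measurable]: "(\<lambda>\<psi>. cinner M x (\<lambda>j. \<psi> (j,i))) \<in> borel_measurable ?P"
      by (rule meas_cinner_col) (use that in auto)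
    show ?thesis unfolding G_def by measurable
  qed
  have EX: "P.expectation (XX i) \<le> p" if "i < n" for i
  proof -
    have "P.expectation (XX i) = P.expectation (indicator {\<Phi> \<in> space ?P. G i \<Phi>})"
      by (intro Bochner_Integration.integral_cong) (auto simp: XX_def Y_def Gr)
    also have "\<dots> = measure ?P {\<Phi> \<in> space ?P. G i \<Phi>}"
      by (simp add: Int_absorb2)
    also have "\<dots> \<le> p" unfolding p_def G_def
      by (rule col_event[OF s that T X])
    finally show ?thesis .
  qed
  interpret H: Hoeffding_ineq ?P "{..<n}" XX "\<lambda>_. 0" "\<lambda>_. 1" "\<Sum>i<n. P.expectation (XX i)"
  proof unfold_locales
    show "finite {..<n}" by simp
    show "P.indep_vars (\<lambda>_. borel) XX {..<n}" by (rule ind)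
    show "AE x in ?P. XX i x \<in> {0..1}" if "i \<in> {..<n}" for i
      by (auto simp: XX_def Y_def)
  qed simp
  have mu: "(\<Sum>i<n. P.expectation (XX i)) \<le> real n * p"
    using sum_mono[of "{..<n}" "\<lambda>i. P.expectation (XX i)" "\<lambda>_. p"] EX by simp
  have Hm: "{\<Phi> \<in> space ?P. (\<Sum>i<n. P.expectation (XX i)) + \<epsilon> \<le> (\<Sum>i<n. XX i \<Phi>)} \<in> sets ?P"
  proof -
    have [measurable]: "XX i \<in> borel_measurable ?P" if "i < n" for i
      using ind that unfolding P.indep_vars_def by auto
    show ?thesis by measurable
  qed
  have "measure ?P {\<Phi> \<in> space ?P. real n * p + \<epsilon> \<le> real (card {i. i < n \<and> G i \<Phi>})}
     \<le> measure ?P {\<Phi> \<in> space ?P. (\<Sum>i<n. P.expectation (XX i)) + \<epsilon> \<le> (\<Sum>i<n. XX i \<Phi>)}"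
    by (rule P.finite_measure_mono[OF _ Hm]) (use mu in \<open>auto simp: sumX\<close>)
  also have "\<dots> \<le> exp (- 2 * \<epsilon>^2 / (\<Sum>i<n. (1 - 0)^2))"
    by (rule H.Hoeffding_ineq_ge[OF \<epsilon>]) (use n in simp)
  also have "(\<Sum>i<n. (1 - 0::real)^2) = real n" by simp
  finally show ?thesis unfolding p_def G_def .
qed



lemma card_as_sum: fixes n :: nat shows "real (card {i. i < n \<and> P i}) = (\<Sum>i<n. if P i then 1 else 0)"
proof -
  have "(\<Sum>i<n. if P i then 1 else (0::real)) = real (card ({..<n} \<inter> {i. P i}))"
    by (simp add: sum.If_cases)
  also have "{..<n} \<inter> {i. P i} = {i. i < n \<and> P i}" by auto
  finally show ?thesis by simp
qed

lemma noise_count: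
  fixes \<nu> :: "nat \<Rightarrow> real" and T :: real
  assumes T: "T > 0"
  shows "real (card {i. i < n \<and> T < \<nu> i}) * T^2 \<le> (rvnorm n \<nu>)^2"
proof -
  let ?N = "{i. i < n \<and> T < \<nu> i}"
  have "real (card ?N) * T^2 = (\<Sum>i\<in>?N. T^2)" by simp
  also have "\<dots> \<le> (\<Sum>i\<in>?N. (\<nu> i)^2)"
    by (intro sum_mono) (use T in \<open>auto intro: power_mono\<close>)
  also have "\<dots> \<le> (\<Sum>i<n. (\<nu> i)^2)"
    by (intro sum_mono2) auto
  also have "\<dots> = (rvnorm n \<nu>)^2"
    by (simp add: rvnorm_def sum_nonneg)
  finally show ?thesis .
qed



theorem theorem6p11:
  fixes C C' :: real
  assumes "C > 0" and "C' > 0"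
  shows "\<exists>c0 c1 :: real. \<exists>M0 :: nat. c0 > 0 \<and> c1 > 0 \<and>
    (\<forall>M n (x :: nat \<Rightarrow> complex) (\<nu> :: nat \<Rightarrow> real).
       M \<ge> M0 \<and> real n \<ge> exp (C / 8) * real M * ln (real M) \<and>
       (\<exists>j<M. x j \<noteq> 0) \<and>
       rvnorm n \<nu> / (cvnorm M x)\<^sup>2 \<le> C' / sqrt (real M)
       \<longrightarrow> measure (gauss_matrix M n)
             {\<Phi> \<in> space (gauss_matrix M n).
                real (card {i. i < n \<and>
                   (cmod (cinner M x (\<lambda>j. \<Phi> (j, i))))\<^sup>2 + \<nu> i
                     > 2 * C / real M * (cvnorm M x)\<^sup>2})
                < 2 * (3 * exp (- C / 8)) * real n}
           \<ge> 1 - c0 * exp (- c1 * real M))"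
proof -
  have C: "C > 0" and C': "C' > 0" by fact+
  define e where "e = exp (- C / 8)"
  have e0: "e > 0" by (simp add: e_def)
  define c1 where "c1 = 2 * e"
  define M0 :: nat where "M0 = nat \<lceil>exp (C'^2/C^2 + 1)\<rceil> + 1"
  show ?thesis
  proof (rule exI[of _ "1::real"], rule exI[of _ c1], rule exI[of _ M0], intro conjI allI impI)
    show "(0::real) < 1" by simp
    show "c1 > 0" using e0 by (simp add: c1_def)
    fix M n :: nat and x :: "nat \<Rightarrow> complex" and \<nu> :: "nat \<Rightarrow> real"
    assume H: "M0 \<le> M \<and> exp (C / 8) * real M * ln (real M) \<le> real n \<and> (\<exists>j<M. x j \<noteq> 0) \<and>
       rvnorm n \<nu> / (cvnorm M x)\<^sup>2 \<le> C' / sqrt (real M)"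
    then have MM0: "M0 \<le> M" and nbig: "exp (C / 8) * real M * ln (real M) \<le> real n"
      and xnz: "\<exists>j<M. x j \<noteq> 0" and nu: "rvnorm n \<nu> / (cvnorm M x)\<^sup>2 \<le> C' / sqrt (real M)"
      by auto
    have Mge: "exp (C'^2/C^2 + 1) \<le> real M"
    proof -
      have "exp (C'^2/C^2 + 1) \<le> real (nat \<lceil>exp (C'^2/C^2 + 1)\<rceil>)" by linarith
      also have "\<dots> \<le> real M" using MM0 by (simp add: M0_def)
      finally show ?thesis .
    qed
    have M0pos: "real M > 0" using Mge by (smt (verit) exp_gt_zero)
    then have Mpos: "M > 0" by simp
    have lnM: "C'^2/C^2 + 1 \<le> ln (real M)"
      using Mge M0pos by (simp add: ln_ge_iff)
    have lnM1: "1 \<le> ln (real M)" using lnM by (smt (verit) divide_nonneg_nonneg zero_le_power2)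
    have lnM2: "C'^2/C^2 \<le> ln (real M)" using lnM by linarith
    define X2 where "X2 = (\<Sum>j<M. (cmod (x j))^2)"
    have X2pos: "X2 > 0"
    proof -
      from xnz obtain j where "j < M" "x j \<noteq> 0" by auto
      then show ?thesis unfolding X2_def by (intro sum_pos2[of _ j]) auto
    qed
    have cv: "(cvnorm M x)^2 = X2"
      unfolding cvnorm_def X2_def by (simp add: sum_nonneg)
    define T where "T = C / real M * X2"
    have T0: "T > 0" using C M0pos X2pos by (simp add: T_def)
    have en: "real M * ln (real M) \<le> e * real n"
    proof -
      have "e * (exp (C / 8) * real M * ln (real M)) \<le> e * real n"
        using nbig e0 by (intro mult_left_mono) auto
      moreover have "e * exp (C / 8) = 1" by (simp add: e_def exp_minus field_simps)
      ultimately show ?thesis by (simp add: mult.assoc[symmetric])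
    qed
    have npos: "n > 0"
    proof -
      have "0 < real M * ln (real M)" using M0pos lnM1 by (intro mult_pos_pos; linarith)
      then have "0 < e * real n" using en by linarith
      then show ?thesis using e0 by (simp add: zero_less_mult_iff)
    qed
    define N where "N = {i. i < n \<and> T < \<nu> i}"
    have cardN: "real (card N) \<le> e * real n"
    proof -
      have rv0: "rvnorm n \<nu> \<ge> 0" by (simp add: rvnorm_def sum_nonneg)
      have "rvnorm n \<nu> \<le> C' / sqrt (real M) * X2"
        using nu X2pos by (simp add: cv pos_divide_le_eq)
      then have "(rvnorm n \<nu>)^2 \<le> (C' / sqrt (real M) * X2)^2"
        using rv0 by (intro power_mono) auto
      also have "\<dots> = C'^2 / real M * X2^2"
        using M0pos by (simp add: power_mult_distrib power_divide)
      finally have r2: "(rvnorm n \<nu>)^2 \<le> C'^2 / real M * X2^2" .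
      have "real (card N) * T^2 \<le> C'^2 / real M * X2^2"
        using noise_count[OF T0, of n \<nu>] r2 unfolding N_def by linarith
      moreover have "T^2 = C^2 / (real M)^2 * X2^2" by (simp add: T_def power_mult_distrib power_divide)
      ultimately have "real (card N) * (C^2 / (real M)^2 * X2^2) \<le> C'^2 / real M * X2^2" by simp
      then have "real (card N) * C^2 \<le> C'^2 * real M"
        using M0pos X2pos by (simp add: field_simps power2_eq_square)
      then have "real (card N) \<le> C'^2 / C^2 * real M"
        using C by (simp add: field_simps)
      also have "\<dots> \<le> ln (real M) * real M"
        using lnM2 M0pos by (intro mult_right_mono) auto
      also have "\<dots> \<le> e * real n" using en by (simp add: mult.commute)
      finally show ?thesis .
    qed
    let ?K = "{..<M} \<times> {..<n}"
    let ?P = "PiM ?K (\<lambda>_. cgauss (1 / real M))"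
    have gm: "gauss_matrix M n = ?P" by (simp add: gauss_matrix_def)
    have s: "1 / real M > 0" using M0pos by simp
    interpret Cg: prob_space "cgauss (1 / real M)" by (rule prob_space_cgauss[OF s])
    interpret P: prob_space ?P by (rule prob_space_PiM) (rule Cg.prob_space_axioms)
    define G where "G = (\<lambda>\<Phi>::nat\<times>nat \<Rightarrow> complex. {i. i < n \<and> T < (cmod (cinner M x (\<lambda>j. \<Phi> (j,i))))^2})"
    define p where "p = 4 * exp (- ((T/2) / ((\<Sum>j<M. (cmod (x j))^2) * (1 / real M))))"
    have p: "p = 4 * exp (- C / 2)"
    proof -
      have "(T/2) / ((\<Sum>j<M. (cmod (x j))^2) * (1 / real M)) = C / 2"
        using M0pos X2pos by (simp add: T_def X2_def[symmetric] field_simps)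
      then show ?thesis by (simp add: p_def)
    qed
    have pe: "p \<le> 4 * e"
      unfolding p e_def using C by simp
    define \<epsilon> where "\<epsilon> = e * real n"
    have \<epsilon>0: "\<epsilon> \<ge> 0" using e0 by (simp add: \<epsilon>_def)
    have thr: "2 * C / real M * (cvnorm M x)\<^sup>2 = 2 * T" by (simp add: cv T_def)
    define Good where "Good = {\<Phi> \<in> space ?P.
                real (card {i. i < n \<and>
                   (cmod (cinner M x (\<lambda>j. \<Phi> (j, i))))\<^sup>2 + \<nu> i
                     > 2 * C / real M * (cvnorm M x)\<^sup>2})
                < 2 * (3 * exp (- C / 8)) * real n}"
    define B where "B = {\<Phi> \<in> space ?P. real n * p + \<epsilon> \<le> real (card (G \<Phi>))}"
    have colm[measurable]: "(\<lambda>\<Phi>. cinner M x (\<lambda>j. \<Phi> (j,i))) \<in> borel_measurable ?P" if "i < n" for i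
      by (rule meas_cinner_col) (use that in auto)
    have Goodm: "Good \<in> sets ?P"
    proof -
      have "Good = {\<Phi> \<in> space ?P. (\<Sum>i<n. if (cmod (cinner M x (\<lambda>j. \<Phi> (j, i))))\<^sup>2 + \<nu> i
                     > 2 * C / real M * (cvnorm M x)\<^sup>2 then 1 else 0) < 2 * (3 * exp (- C / 8)) * real n}"
        unfolding Good_def card_as_sum ..
      also have "\<dots> \<in> sets ?P"
      proof -
        have "(\<lambda>\<Phi>. \<Sum>i<n. if (cmod (cinner M x (\<lambda>j. \<Phi> (j, i))))\<^sup>2 + \<nu> i
                     > 2 * C / real M * (cvnorm M x)\<^sup>2 then 1 else (0::real)) \<in> borel_measurable ?P"
          by (intro borel_measurable_sum) measurable
        then show ?thesis by measurable
      qed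
      finally show ?thesis .
    qed
    have Bm: "B \<in> sets ?P"
    proof -
      have "B = {\<Phi> \<in> space ?P. real n * p + \<epsilon> \<le> (\<Sum>i<n. if T < (cmod (cinner M x (\<lambda>j. \<Phi> (j, i))))\<^sup>2 then 1 else 0)}"
        unfolding B_def G_def card_as_sum ..
      also have "\<dots> \<in> sets ?P"
      proof -
        have "(\<lambda>\<Phi>. \<Sum>i<n. if T < (cmod (cinner M x (\<lambda>j. \<Phi> (j, i))))\<^sup>2 then 1 else (0::real)) \<in> borel_measurable ?P"
          by (intro borel_measurable_sum) measurable
        then show ?thesis by measurable
      qed
      finally show ?thesis .
    qed
    have sub: "space ?P - Good \<subseteq> B"
    proof
      fix \<Phi> assume \<Phi>: "\<Phi> \<in> space ?P - Good"
      let ?Q = "{i. i < n \<and> (cmod (cinner M x (\<lambda>j. \<Phi> (j, i))))\<^sup>2 + \<nu> i > 2 * T}"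
      have big: "6 * e * real n \<le> real (card ?Q)"
        using \<Phi> unfolding Good_def thr e_def by auto
      have "?Q \<subseteq> N \<union> G \<Phi>" unfolding N_def G_def by auto
      then have "card ?Q \<le> card (N \<union> G \<Phi>)" by (intro card_mono) (auto simp: N_def G_def)
      also have "\<dots> \<le> card N + card (G \<Phi>)" by (rule card_Un_le)
      finally have "real (card ?Q) \<le> real (card N) + real (card (G \<Phi>))" by linarith
      then have "5 * e * real n \<le> real (card (G \<Phi>))" using big cardN by linarith
      moreover have "real n * p + \<epsilon> \<le> 5 * e * real n"
        using pe npos by (simp add: \<epsilon>_def algebra_simps)
      ultimately show "\<Phi> \<in> B" using \<Phi> unfolding B_def by auto
    qed
    have "measure ?P B \<le> exp (- 2 * \<epsilon>^2 / real n)"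
      unfolding B_def G_def p_def
      by (rule count_bound[OF s npos Mpos T0 _ \<epsilon>0]) (use X2pos in \<open>simp add: X2_def\<close>)
    also have "- 2 * \<epsilon>^2 / real n = - 2 * e * (e * real n)"
      using npos by (simp add: \<epsilon>_def power2_eq_square field_simps)
    also have "exp (- 2 * e * (e * real n)) \<le> exp (- c1 * real M)"
    proof -
      have "real M \<le> real M * ln (real M)" using lnM1 M0pos by simp
      then have "real M \<le> e * real n" using en by linarith
      then have "2 * e * real M \<le> 2 * e * (e * real n)" using e0 by simp
      then show ?thesis by (simp add: c1_def)
    qed
    finally have mB: "measure ?P B \<le> exp (- c1 * real M)" .
    have "measure ?P (space ?P - Good) \<le> measure ?P B"
      by (rule P.finite_measure_mono[OF sub Bm])
    moreover have "measure ?P (space ?P - Good) = 1 - measure ?P Good"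
      by (rule P.prob_compl[OF Goodm])
    ultimately have "1 - exp (- c1 * real M) \<le> measure ?P Good" using mB by linarith
    then show "1 - 1 * exp (- c1 * real M) \<le> measure (gauss_matrix M n)
             {\<Phi> \<in> space (gauss_matrix M n).
                real (card {i. i < n \<and>
                   (cmod (cinner M x (\<lambda>j. \<Phi> (j, i))))\<^sup>2 + \<nu> i
                     > 2 * C / real M * (cvnorm M x)\<^sup>2})
                < 2 * (3 * exp (- C / 8)) * real n}"
      unfolding gm Good_def by simp
  qed
qed


end
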